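(* Consider a tripartite Bell scenario in which Alice has inputs $A_1,A_2,A_3$, Bob has inputs $B_1,B_2$ and Charlie has a single input $C_1$, and every input has four outcomes labelled by bit pairs $x=(x_0,x_1)\in\{0,1\}^2$. For an observable $X$ with outcome $(x_0,x_1)$ define the $\pm1$-valued quantities $X^{10}=(-1)^{x_0}$, $X^{01}=(-1)^{x_1}$, $X^{11}=(-1)^{x_0\oplus x_1}$, and write $\langle X^{ij}Y^{kl}\rangle$ for the expectation of $X^{ij}Y^{kl}$ when $X$ and $Y$ are measured jointly by different parties. Define $$\mathcal{I}=\langle A_1^{10}B_1^{10}\rangle+\langle A_1^{01}B_2^{10}\rangle+\langle A_1^{11}C_1^{10}\rangle+\langle A_2^{10}B_1^{01}\rangle+\langle A_2^{01}B_2^{01}\rangle+\langle A_2^{11}C_1^{01}\rangle+\langle A_3^{10}B_1^{11}\rangle+\langle A_3^{01}B_2^{11}\rangle-\langle A_3^{11}C_1^{11}\rangle .$$ Then: (i) the Alice–Bob part of $\mathcal{I}$ (the six terms involving $B_1,B_2$) attains its maximal value $6$ in a local deterministic model, and the Alice–Charlie part (the three terms involving $C_1$) attains its maximal value $3$ in a local deterministic model; (ii) every local hidden variable model satisfies $\mathcal{I}\le 7$; (iii) there exists a no-signaling behaviour $P(a,b,c\mid A_k,B_l,C_1)$ for which $\mathcal{I}=9$.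
   Context: A local hidden variable model is a convex mixture of deterministic assignments of an outcome to each of the inputs $A_1,A_2,A_3,B_1,B_2,C_1$. A no-signaling behaviour is a family of distributions $P(a,b,c\mid A_k,B_l,C_1)$, $k\in\{1,2,3\}$, $l\in\{1,2\}$, such that the marginal distribution of any subset of the parties does not depend on the inputs of the remaining parties. *)

theory Defs
  imports Complex_Main
begin

text \<open>Outcomes are bit pairs (x0, x1) :: bool \<times> bool (True = 1).
  Alice's inputs A_1,A_2,A_3 are indexed by k \<in> {1,2,3}, Bob's inputs B_1,B_2 by
  l \<in> {1,2}; Charlie has the single input C_1, which is left implicit.
  A behaviour is P k l a b c = P(a,b,c | A_k, B_l, C_1).\<close>

type_synonym outcome = "bool \<times> bool"
type_synonym behaviour = "nat \<Rightarrow> nat \<Rightarrow> outcome \<Rightarrow> outcome \<Rightarrow> outcome \<Rightarrow> real"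

definition sgn10 :: "outcome \<Rightarrow> real" where
  "sgn10 x = (if fst x then -1 else 1)"
definition sgn01 :: "outcome \<Rightarrow> real" where
  "sgn01 x = (if snd x then -1 else 1)"
definition sgn11 :: "outcome \<Rightarrow> real" where
  "sgn11 x = (if fst x \<noteq> snd x then -1 else 1)"

definition is_behaviour :: "behaviour \<Rightarrow> bool" where
  "is_behaviour P \<longleftrightarrow>
     (\<forall>k\<in>{1,2,3}. \<forall>l\<in>{1,2}.
        (\<forall>a b c. P k l a b c \<ge> 0) \<and> (\<Sum>a\<in>UNIV. \<Sum>b\<in>UNIV. \<Sum>c\<in>UNIV. P k l a b c) = 1)"

definition no_signaling :: "behaviour \<Rightarrow> bool" where
  "no_signaling P \<longleftrightarrow>
     \<comment> \<open>Alice alone: independent of Bob's input\<close>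
     (\<forall>k\<in>{1,2,3}. \<forall>l\<in>{1,2}. \<forall>l'\<in>{1,2}. \<forall>a.
        (\<Sum>b\<in>UNIV. \<Sum>c\<in>UNIV. P k l a b c) = (\<Sum>b\<in>UNIV. \<Sum>c\<in>UNIV. P k l' a b c)) \<and>
     \<comment> \<open>Bob alone: independent of Alice's input\<close>
     (\<forall>k\<in>{1,2,3}. \<forall>k'\<in>{1,2,3}. \<forall>l\<in>{1,2}. \<forall>b.
        (\<Sum>a\<in>UNIV. \<Sum>c\<in>UNIV. P k l a b c) = (\<Sum>a\<in>UNIV. \<Sum>c\<in>UNIV. P k' l a b c)) \<and>
     \<comment> \<open>Charlie alone: independent of Alice's and Bob's inputs\<close>
     (\<forall>k\<in>{1,2,3}. \<forall>k'\<in>{1,2,3}. \<forall>l\<in>{1,2}. \<forall>l'\<in>{1,2}. \<forall>c.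
        (\<Sum>a\<in>UNIV. \<Sum>b\<in>UNIV. P k l a b c) = (\<Sum>a\<in>UNIV. \<Sum>b\<in>UNIV. P k' l' a b c)) \<and>
     \<comment> \<open>Alice and Charlie: independent of Bob's input\<close>
     (\<forall>k\<in>{1,2,3}. \<forall>l\<in>{1,2}. \<forall>l'\<in>{1,2}. \<forall>a c.
        (\<Sum>b\<in>UNIV. P k l a b c) = (\<Sum>b\<in>UNIV. P k l' a b c)) \<and>
     \<comment> \<open>Bob and Charlie: independent of Alice's input\<close>
     (\<forall>k\<in>{1,2,3}. \<forall>k'\<in>{1,2,3}. \<forall>l\<in>{1,2}. \<forall>b c.
        (\<Sum>a\<in>UNIV. P k l a b c) = (\<Sum>a\<in>UNIV. P k' l a b c))"

definition det_behaviour ::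
  "(nat \<Rightarrow> outcome) \<Rightarrow> (nat \<Rightarrow> outcome) \<Rightarrow> outcome \<Rightarrow> behaviour" where
  "det_behaviour fa fb fc = (\<lambda>k l a b c. if fa k = a \<and> fb l = b \<and> fc = c then 1 else 0)"

definition is_lhv :: "behaviour \<Rightarrow> bool" where
  "is_lhv P \<longleftrightarrow>
     (\<exists>(S :: ((nat \<Rightarrow> outcome) \<times> (nat \<Rightarrow> outcome) \<times> outcome) set) w.
        finite S \<and> (\<forall>s\<in>S. w s \<ge> (0::real)) \<and> sum w S = 1 \<and>
        (\<forall>k\<in>{1,2,3}. \<forall>l\<in>{1,2}. \<forall>a b c.
           P k l a b c = (\<Sum>s\<in>S. w s * det_behaviour (fst s) (fst (snd s)) (snd (snd s)) k l a b c)))"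

text \<open>Correlators. For the Alice--Charlie correlator Bob's input is fixed to B_1;
  under no-signaling this choice is irrelevant.\<close>
definition corrAB :: "behaviour \<Rightarrow> nat \<Rightarrow> nat \<Rightarrow> (outcome \<Rightarrow> real) \<Rightarrow> (outcome \<Rightarrow> real) \<Rightarrow> real" where
  "corrAB P k l f g = (\<Sum>a\<in>UNIV. \<Sum>b\<in>UNIV. \<Sum>c\<in>UNIV. P k l a b c * f a * g b)"

definition corrAC :: "behaviour \<Rightarrow> nat \<Rightarrow> (outcome \<Rightarrow> real) \<Rightarrow> (outcome \<Rightarrow> real) \<Rightarrow> real" where
  "corrAC P k f g = (\<Sum>a\<in>UNIV. \<Sum>b\<in>UNIV. \<Sum>c\<in>UNIV. P k 1 a b c * f a * g c)"

definition I_AB :: "behaviour \<Rightarrow> real" where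
  "I_AB P = corrAB P 1 1 sgn10 sgn10 + corrAB P 1 2 sgn01 sgn10
          + corrAB P 2 1 sgn10 sgn01 + corrAB P 2 2 sgn01 sgn01
          + corrAB P 3 1 sgn10 sgn11 + corrAB P 3 2 sgn01 sgn11"

definition I_AC :: "behaviour \<Rightarrow> real" where
  "I_AC P = corrAC P 1 sgn11 sgn10 + corrAC P 2 sgn11 sgn01 - corrAC P 3 sgn11 sgn11"

definition I_total :: "behaviour \<Rightarrow> real" where
  "I_total P = I_AB P + I_AC P"

end

theory Submission imports Defs begin
lemma UNIV_outcome: "(UNIV::outcome set) = {(False,False),(False,True),(True,False),(True,True)}"
  by (auto simp: UNIV_bool)

lemma lin_AB:
  assumes "finite S" "k \<in> {1,2,3}" "l \<in> {1,2}"
    and "\<forall>k\<in>{1,2,3}. \<forall>l\<in>{1,2}. \<forall>a b c. P k l a b c = (\<Sum>s\<in>S. w s * D s k l a b c)"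
  shows "corrAB P k l f g = (\<Sum>s\<in>S. w s * corrAB (D s) k l f g)"
proof -
  have "corrAB P k l f g = (\<Sum>a\<in>UNIV. \<Sum>b\<in>UNIV. \<Sum>c\<in>UNIV. \<Sum>s\<in>S. w s * (D s k l a b c * f a * g b))"
  proof -
    have e: "\<And>a b c. P k l a b c = (\<Sum>s\<in>S. w s * D s k l a b c)" using assms(2,3,4) by blast
    show ?thesis unfolding corrAB_def e by (simp add: sum_distrib_right mult.assoc)
  qed
  also have "\<dots> = (\<Sum>s\<in>S. w s * corrAB (D s) k l f g)"
    unfolding corrAB_def sum_distrib_left
    by (subst (3) sum.swap, subst (2) sum.swap, subst sum.swap, rule refl)
  finally show ?thesis .
qed

lemma lin_AC:
  assumes "finite S" "k \<in> {1,2,3}"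
    and "\<forall>k\<in>{1,2,3}. \<forall>l\<in>{1,2}. \<forall>a b c. P k l a b c = (\<Sum>s\<in>S. w s * D s k l a b c)"
  shows "corrAC P k f g = (\<Sum>s\<in>S. w s * corrAC (D s) k f g)"
proof -
  have "corrAC P k f g = (\<Sum>a\<in>UNIV. \<Sum>b\<in>UNIV. \<Sum>c\<in>UNIV. \<Sum>s\<in>S. w s * (D s k 1 a b c * f a * g c))"
  proof -
    have e: "\<And>a b c. P k 1 a b c = (\<Sum>s\<in>S. w s * D s k 1 a b c)" using assms(2,3) by blast
    show ?thesis unfolding corrAC_def e by (simp add: sum_distrib_right mult.assoc)
  qed
  also have "\<dots> = (\<Sum>s\<in>S. w s * corrAC (D s) k f g)"
    unfolding corrAC_def sum_distrib_left
    by (subst (3) sum.swap, subst (2) sum.swap, subst sum.swap, rule refl)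
  finally show ?thesis .
qed

definition Pns :: behaviour where
  "Pns k l a b c = (if
     (if l = 1 then (if k = 1 then fst b = fst a else if k = 2 then snd b = fst a else (fst b \<noteq> snd b) = fst a)
      else (if k = 1 then fst b = snd a else if k = 2 then snd b = snd a else (fst b \<noteq> snd b) = snd a)) \<and>
     (if k = 1 then fst c = (fst a \<noteq> snd a) else if k = 2 then snd c = (fst a \<noteq> snd a) else (fst c \<noteq> snd c) = (fst a = snd a))
   then 1/16 else 0)"

lemma Pns_beh: "is_behaviour Pns"
  unfolding is_behaviour_def Pns_def by (simp add: UNIV_outcome)

lemma Pns_val: "I_total Pns = 9"
  unfolding I_total_def I_AB_def I_AC_def corrAB_def corrAC_def Pns_def
  by (simp add: UNIV_outcome sgn10_def sgn01_def sgn11_def)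

lemma Pns_ns: "no_signaling Pns"
  unfolding no_signaling_def Pns_def
  by (simp add: UNIV_outcome split_paired_All all_bool_eq)
lemma pt: "(if x = a \<and> y = b \<and> z = c then 1 else 0) * F a b c = (if x = a then (if y = b then (if z = c then F x y z else 0) else 0) else (0::real))" by auto
lemma sif: "(\<Sum>x\<in>A. if P then f x else (0::real)) = (if P then sum f A else 0)" by simp
lemma corrAB_det: "corrAB (det_behaviour fa fb fc) k l f g = f (fa k) * g (fb l)"
  unfolding corrAB_def det_behaviour_def
  using pt[of "fa k" _ "fb l" _ fc _ "\<lambda>a b c. f a * g b"]
  by (simp add: mult.assoc sif sum.delta)
lemma corrAC_det: "corrAC (det_behaviour fa fb fc) k f g = f (fa k) * g fc"
  unfolding corrAC_def det_behaviour_def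
  using pt[of "fa k" _ "fb 1" _ fc _ "\<lambda>a b c. f a * g c"]
  by (simp add: mult.assoc sif sum.delta)

lemma sg: "sgn10 x \<in> {1,-1}" "sgn01 x \<in> {1,-1}" "sgn11 x \<in> {1,-1}"
  by (auto simp: sgn10_def sgn01_def sgn11_def)
lemma pm: "(u::real) \<in> {1,-1} \<Longrightarrow> v \<in> {1,-1} \<Longrightarrow> u * v \<le> 1 \<and> - (u * v) \<le> 1" by auto

lemma det7: "I_total (det_behaviour fa fb fc) \<le> 7"
proof -
  obtain p1 q1 where 1: "fa 1 = (p1,q1)" by fastforce
  obtain p2 q2 where 2: "fa 2 = (p2,q2)" by fastforce
  obtain p3 q3 where 3: "fa 3 = (p3,q3)" by fastforce
  obtain u1 v1 where 4: "fb 1 = (u1,v1)" by fastforce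
  obtain u2 v2 where 5: "fb 2 = (u2,v2)" by fastforce
  obtain g h where 6: "fc = (g,h)" by fastforce
  show ?thesis unfolding I_total_def I_AB_def I_AC_def corrAB_det corrAC_det 1 2 3 4 5 6
    by (cases p1; cases q1; cases p2; cases q2; cases p3; cases q3; cases u1; cases v1; cases u2; cases v2; cases g; cases h; simp add: sgn10_def sgn01_def sgn11_def)
qed

lemma lhv7: assumes "is_lhv P" shows "I_total P \<le> 7"
proof -
  obtain S w where fS: "finite S" and w0: "\<forall>s\<in>S. w s \<ge> (0::real)" and w1: "sum w S = 1"
    and eq: "\<forall>k\<in>{1,2,3}. \<forall>l\<in>{1,2}. \<forall>a b c.
           P k l a b c = (\<Sum>s\<in>S. w s * (\<lambda>s. det_behaviour (fst s) (fst (snd s)) (snd (snd s))) s k l a b c)"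
    using assms unfolding is_lhv_def by auto
  define D where "D = (\<lambda>s::((nat \<Rightarrow> outcome) \<times> (nat \<Rightarrow> outcome) \<times> outcome). det_behaviour (fst s) (fst (snd s)) (snd (snd s)))"
  have eq': "\<forall>k\<in>{1,2,3}. \<forall>l\<in>{1,2}. \<forall>a b c. P k l a b c = (\<Sum>s\<in>S. w s * D s k l a b c)"
    using eq unfolding D_def by simp
  have "I_total P = (\<Sum>s\<in>S. w s * I_total (D s))"
    unfolding I_total_def I_AB_def I_AC_def
    by (simp add: lin_AB[OF fS _ _ eq'] lin_AC[OF fS _ eq'] algebra_simps sum.distrib sum_subtractf)
  also have "\<dots> \<le> (\<Sum>s\<in>S. w s * 7)"
    by (rule sum_mono) (use w0 det7 in \<open>auto simp: D_def intro: mult_left_mono\<close>)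
  also have "\<dots> = 7" using w1 by (simp add: sum_distrib_right[symmetric])
  finally show ?thesis .
qed

theorem mainTheorem2:
  shows "((\<forall>fa fb fc. I_AB (det_behaviour fa fb fc) \<le> 6) \<and>
          (\<exists>fa fb fc. I_AB (det_behaviour fa fb fc) = 6) \<and>
          (\<forall>fa fb fc. I_AC (det_behaviour fa fb fc) \<le> 3) \<and>
          (\<exists>fa fb fc. I_AC (det_behaviour fa fb fc) = 3))
       \<and> (\<forall>P. is_lhv P \<longrightarrow> I_total P \<le> 7)
       \<and> (\<exists>P. is_behaviour P \<and> no_signaling P \<and> I_total P = 9)"
proof (intro conjI allI impI)
  fix fa fb fc
  show "I_AB (det_behaviour fa fb fc) \<le> 6"
    unfolding I_AB_def corrAB_det
    using pm[OF sg(1) sg(1), of "fa 1" "fb 1"] pm[OF sg(2) sg(1), of "fa 1" "fb 2"]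
      pm[OF sg(1) sg(2), of "fa 2" "fb 1"] pm[OF sg(2) sg(2), of "fa 2" "fb 2"]
      pm[OF sg(1) sg(3), of "fa 3" "fb 1"] pm[OF sg(2) sg(3), of "fa 3" "fb 2"]
    by linarith
next
  fix fa fb fc
  show "I_AC (det_behaviour fa fb fc) \<le> 3"
    unfolding I_AC_def corrAC_det
    using pm[OF sg(3) sg(1), of "fa 1" fc] pm[OF sg(3) sg(2), of "fa 2" fc]
      pm[OF sg(3) sg(3), of "fa 3" fc]
    by linarith
next
  show "\<exists>fa fb fc. I_AB (det_behaviour fa fb fc) = 6"
    by (rule exI[of _ "\<lambda>_. (False,False)"], rule exI[of _ "\<lambda>_. (False,False)"], rule exI[of _ "(False,False)"])
       (simp add: I_AB_def corrAB_det sgn10_def sgn01_def sgn11_def)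
next
  show "\<exists>fa fb fc. I_AC (det_behaviour fa fb fc) = 3"
    by (rule exI[of _ "\<lambda>k. if k = 3 then (True,False) else (False,False)"], rule exI[of _ "\<lambda>_. (False,False)"], rule exI[of _ "(False,False)"])
       (simp add: I_AC_def corrAC_det sgn10_def sgn01_def sgn11_def)
next
  fix P :: behaviour assume "is_lhv P" thus "I_total P \<le> 7" by (rule lhv7)
next
  show "\<exists>P. is_behaviour P \<and> no_signaling P \<and> I_total P = 9"
    using Pns_beh Pns_ns Pns_val by blast
qed

end
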